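(* Let $D=(E,\mathcal{F})$ be a delta-matroid and let $e_1,e_2\in E$ with $e_1\neq e_2$. Then the primal type of $e_2$ in $D-e_1$ is the same as its primal type in $D$.
   Context: A delta-matroid is a pair $D=(E,\mathcal{F})$ with $E$ finite, $\mathcal{F}$ a nonempty collection of subsets of $E$ (feasible sets), such that for all $X,Y\in\mathcal{F}$ and $u\in X\Delta Y$ there is $v\in X\Delta Y$ (possibly $v=u$) with $X\Delta\{u,v\}\in\mathcal{F}$. The twist by $A\subseteq E$ is $D*A=(E,\{A\Delta X:X\in\mathcal{F}\})$. An element $e$ is a coloop if it lies in every feasible set. The deletion $D-e$ is $(E-e,\{F\in\mathcal{F}: e\notin F\})$ if $e$ is not a coloop, and $(E-e,\{F-e: F\in\mathcal{F}\})$ if $e$ is a coloop. Let $\mathcal{F}_{\min}(D)$ be the set of minimum-cardinality feasible sets. An element $e$ is a ribbon loop if $e$ lies in no member of $\mathcal{F}_{\min}(D)$; a ribbon loop $e$ is non-orientable if it is still a ribbon loop in $D*e$, and orientable otherwise. The primal type of $e$ in $D$ is $p$ if $e$ is not a ribbon loop, $u$ if it is an orientable ribbon loop, and $t$ if it is a non-orientable ribbon loop. *)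

theory Defs
  imports Main
begin

definition sdiff :: "'a set \<Rightarrow> 'a set \<Rightarrow> 'a set" (infixl "\<triangle>" 65) where
  "X \<triangle> Y = (X - Y) \<union> (Y - X)"

type_synonym 'a setsystem = "'a set \<times> 'a set set"

definition delta_matroid :: "'a setsystem \<Rightarrow> bool" where
  "delta_matroid D \<longleftrightarrow>
     (let E = fst D; F = snd D in
       finite E \<and> F \<noteq> {} \<and> (\<forall>X\<in>F. X \<subseteq> E) \<and>
       (\<forall>X\<in>F. \<forall>Y\<in>F. \<forall>u\<in>X \<triangle> Y. \<exists>v\<in>X \<triangle> Y. X \<triangle> {u, v} \<in> F))"

definition twist :: "'a setsystem \<Rightarrow> 'a set \<Rightarrow> 'a setsystem" where
  "twist D A = (fst D, (\<lambda>X. A \<triangle> X) ` snd D)"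

definition coloop :: "'a setsystem \<Rightarrow> 'a \<Rightarrow> bool" where
  "coloop D e \<longleftrightarrow> (\<forall>X\<in>snd D. e \<in> X)"

definition deletion :: "'a setsystem \<Rightarrow> 'a \<Rightarrow> 'a setsystem" where
  "deletion D e =
     (if coloop D e then (fst D - {e}, (\<lambda>X. X - {e}) ` snd D)
      else (fst D - {e}, {X \<in> snd D. e \<notin> X}))"

definition Fmin :: "'a setsystem \<Rightarrow> 'a set set" where
  "Fmin D = {X \<in> snd D. \<forall>Y\<in>snd D. card X \<le> card Y}"

definition ribbon_loop :: "'a setsystem \<Rightarrow> 'a \<Rightarrow> bool" where
  "ribbon_loop D e \<longleftrightarrow> (\<forall>X\<in>Fmin D. e \<notin> X)"

datatype ptype = P | U | T

definition primal_type :: "'a setsystem \<Rightarrow> 'a \<Rightarrow> ptype" where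
  "primal_type D e =
     (if \<not> ribbon_loop D e then P
      else if ribbon_loop (twist D {e}) e then T
      else U)"

end

theory Submission
  imports Defs
begin

definition exch :: "'a set set \<Rightarrow> bool" where
  "exch F \<longleftrightarrow> (\<forall>X\<in>F. \<forall>Y\<in>F. \<forall>u\<in>X \<triangle> Y. \<exists>v\<in>X \<triangle> Y. X \<triangle> {u, v} \<in> F)"

lemma card_rm:
  assumes "finite X" "e \<in> X" "finite Y" "e \<in> Y"
  shows "card (X - {e}) \<le> card (Y - {e}) \<longleftrightarrow> card X \<le> card Y"
proof -
  have "card X \<ge> 1" "card Y \<ge> 1" using assms card_0_eq by fastforce+
  thus ?thesis using assms by (simp add: card_Diff_singleton) linarith
qed

lemma coloop_case:
  assumes fin: "\<forall>X\<in>F. finite X" and col: "\<forall>X\<in>F. e1 \<in> X" and ne: "e1 \<noteq> e2"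
  shows "ribbon_loop (E', (\<lambda>X. X - {e1}) ` F) e2 \<longleftrightarrow> ribbon_loop (E, F) e2"
proof -
  define G where "G = (\<lambda>X. X - {e1}) ` F"
  have A: "(\<forall>Y\<in>G. card (X - {e1}) \<le> card Y) \<longleftrightarrow> (\<forall>Y\<in>F. card X \<le> card Y)" if X: "X \<in> F" for X
  proof -
    have eq: "card (X - {e1}) \<le> card (Y - {e1}) \<longleftrightarrow> card X \<le> card Y" if Y: "Y \<in> F" for Y
    proof -
      have "finite X" "e1 \<in> X" "finite Y" "e1 \<in> Y" using fin col X Y by blast+
      thus ?thesis by (rule card_rm)
    qed
    have "(\<forall>Y\<in>G. card (X - {e1}) \<le> card Y) \<longleftrightarrow> (\<forall>Y\<in>F. card (X - {e1}) \<le> card (Y - {e1}))"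
      unfolding G_def by blast
    also have "\<dots> \<longleftrightarrow> (\<forall>Y\<in>F. card X \<le> card Y)" using eq by blast
    finally show ?thesis .
  qed
  have FM: "Fmin (E', G) = (\<lambda>X. X - {e1}) ` Fmin (E, F)"
  proof
    show "Fmin (E', G) \<subseteq> (\<lambda>X. X - {e1}) ` Fmin (E, F)"
    proof
      fix Z assume "Z \<in> Fmin (E', G)"
      hence Z: "Z \<in> G" "\<forall>Y\<in>G. card Z \<le> card Y" unfolding Fmin_def by simp_all
      then obtain X where X: "X \<in> F" "Z = X - {e1}" unfolding G_def by blast
      hence "\<forall>Y\<in>F. card X \<le> card Y" using A[OF X(1)] Z(2) by simp
      hence "X \<in> Fmin (E, F)" using X(1) unfolding Fmin_def by simp
      thus "Z \<in> (\<lambda>X. X - {e1}) ` Fmin (E, F)" using X(2) by (rule rev_image_eqI)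
    qed
  next
    show "(\<lambda>X. X - {e1}) ` Fmin (E, F) \<subseteq> Fmin (E', G)"
    proof
      fix Z assume "Z \<in> (\<lambda>X. X - {e1}) ` Fmin (E, F)"
      then obtain X where X: "X \<in> Fmin (E, F)" "Z = X - {e1}" by blast
      hence X1: "X \<in> F" "\<forall>Y\<in>F. card X \<le> card Y" unfolding Fmin_def by simp_all
      hence "\<forall>Y\<in>G. card (X - {e1}) \<le> card Y" using A[OF X1(1)] by simp
      moreover have "X - {e1} \<in> G" unfolding G_def using X1(1) by blast
      ultimately show "Z \<in> Fmin (E', G)" using X(2) unfolding Fmin_def by simp
    qed
  qed
  have "ribbon_loop (E', G) e2 \<longleftrightarrow> (\<forall>Z\<in>(\<lambda>X. X - {e1}) ` Fmin (E, F). e2 \<notin> Z)"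
    unfolding ribbon_loop_def FM by (rule refl)
  also have "\<dots> \<longleftrightarrow> (\<forall>X\<in>Fmin (E, F). e2 \<notin> X - {e1})" by simp
  also have "\<dots> \<longleftrightarrow> ribbon_loop (E, F) e2" unfolding ribbon_loop_def using ne by simp
  finally show ?thesis unfolding G_def .
qed

lemma card_swap:
  assumes "finite X" "e \<in> X" "v \<notin> X"
  shows "card (X - {e} \<union> {v}) = card X"
proof -
  have "X - {e} \<union> {v} = insert v (X - {e})" by blast
  moreover have "card (insert v (X - {e})) = Suc (card (X - {e}))"
    using assms by (intro card_insert_disjoint) auto
  moreover have "card (X - {e}) = card X - 1" using assms(1,2) by (simp add: card_Diff_singleton)
  moreover have "card X > 0" using assms(1,2) by (auto simp: card_gt_0_iff)
  ultimately show ?thesis by simp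
qed

lemma exch_step:
  assumes ex: "exch F" and fin: "\<forall>X\<in>F. finite X"
    and X: "X \<in> F" "\<forall>W\<in>F. card X \<le> card W" "e1 \<in> X"
    and Y: "Y \<in> F" "e1 \<notin> Y"
  shows "\<exists>v. v \<in> Y - X \<and> X - {e1} \<union> {v} \<in> F"
proof -
  have u: "e1 \<in> X \<triangle> Y" using X Y by (auto simp: sdiff_def)
  then obtain v where v: "v \<in> X \<triangle> Y" "X \<triangle> {e1, v} \<in> F"
    using ex X Y unfolding exch_def by blast
  have fX: "finite X" using fin X by blast
  show ?thesis
  proof (cases "v \<in> Y - X")
    case True
    have "X \<triangle> {e1, v} = X - {e1} \<union> {v}" using True X by (auto simp: sdiff_def)
    thus ?thesis using True v by auto
  next
    case False
    then have vX: "v \<in> X" using v by (auto simp: sdiff_def)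
    have "X \<triangle> {e1, v} = X - {e1, v}" using vX X by (auto simp: sdiff_def)
    moreover have "card (X - {e1, v}) < card X"
      using fX X vX by (intro psubset_card_mono) auto
    ultimately have "X - {e1, v} \<in> F" "card (X - {e1, v}) < card X" using v by simp_all
    hence False using X(2) by (meson leD)
    thus ?thesis by blast
  qed
qed

lemma noncoloop_case:
  assumes ex: "exch F" and fin: "\<forall>X\<in>F. finite X" and nc: "\<not> (\<forall>X\<in>F. e1 \<in> X)"
    and ne: "e1 \<noteq> e2"
  shows "ribbon_loop (E', {X \<in> F. e1 \<notin> X}) e2 \<longleftrightarrow> ribbon_loop (E, F) e2"
proof -
  obtain Y where Y: "Y \<in> F" "e1 \<notin> Y" using nc by blast
  obtain X0 where X0: "X0 \<in> F" "\<forall>W\<in>F. card X0 \<le> card W"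
    using ex_has_least_nat[of "\<lambda>X. X \<in> F" Y card] Y by blast
  obtain W where W: "W \<in> F" "\<forall>V\<in>F. card W \<le> card V" "e1 \<notin> W"
  proof (cases "e1 \<in> X0")
    case True
    then obtain v where "v \<in> Y - X0" "X0 - {e1} \<union> {v} \<in> F"
      using exch_step[OF ex fin X0 True Y] by blast
    moreover have "card (X0 - {e1} \<union> {v}) = card X0"
      by (intro card_swap) (use fin X0 True \<open>v \<in> Y - X0\<close> in auto)
    ultimately have "\<forall>V\<in>F. card (X0 - {e1} \<union> {v}) \<le> card V" using X0(2) by simp
    show ?thesis
      by (rule that[of "X0 - {e1} \<union> {v}"]) (use Y(2) \<open>v \<in> Y - X0\<close> \<open>X0 - {e1} \<union> {v} \<in> F\<close> \<open>\<forall>V\<in>F. card (X0 - {e1} \<union> {v}) \<le> card V\<close> in auto)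
  next
    case False show ?thesis by (rule that[of X0]) (use X0 False in auto)
  qed
  have FM: "Fmin (E', {X \<in> F. e1 \<notin> X}) = {X \<in> Fmin (E, F). e1 \<notin> X}"
  proof
    show "Fmin (E', {X \<in> F. e1 \<notin> X}) \<subseteq> {X \<in> Fmin (E, F). e1 \<notin> X}"
    proof
      fix Z assume "Z \<in> Fmin (E', {X \<in> F. e1 \<notin> X})"
      hence Z: "Z \<in> F" "e1 \<notin> Z" "\<forall>V\<in>{X \<in> F. e1 \<notin> X}. card Z \<le> card V"
        unfolding Fmin_def by auto
      hence "card Z \<le> card W" using W by blast
      hence "\<forall>V\<in>F. card Z \<le> card V" using W(2) le_trans by blast
      thus "Z \<in> {X \<in> Fmin (E, F). e1 \<notin> X}" using Z unfolding Fmin_def by simp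
    qed
  next
    show "{X \<in> Fmin (E, F). e1 \<notin> X} \<subseteq> Fmin (E', {X \<in> F. e1 \<notin> X})"
      unfolding Fmin_def by auto
  qed
  show ?thesis
  proof
    assume r: "ribbon_loop (E', {X \<in> F. e1 \<notin> X}) e2"
    show "ribbon_loop (E, F) e2" unfolding ribbon_loop_def
    proof (rule ballI, rule ccontr)
      fix X assume XM: "X \<in> Fmin (E, F)" and "\<not> e2 \<notin> X"
      hence e2X: "e2 \<in> X" by blast
      have Xm: "X \<in> F" "\<forall>V\<in>F. card X \<le> card V" using XM unfolding Fmin_def by simp_all
      show False
      proof (cases "e1 \<in> X")
        case False
        hence "X \<in> Fmin (E', {X \<in> F. e1 \<notin> X})" using XM FM by simp
        thus False using r e2X unfolding ribbon_loop_def by simp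
      next
        case True
        then obtain v where v: "v \<in> W - X" "X - {e1} \<union> {v} \<in> F"
          using exch_step[OF ex fin Xm True W(1) W(3)] by blast
        have "card (X - {e1} \<union> {v}) = card X"
          by (intro card_swap) (use True v fin Xm in simp_all)
        hence "X - {e1} \<union> {v} \<in> Fmin (E, F)" using v(2) Xm unfolding Fmin_def by simp
        moreover have "e1 \<notin> X - {e1} \<union> {v}" using v W(3) by blast
        ultimately have M: "X - {e1} \<union> {v} \<in> Fmin (E', {X \<in> F. e1 \<notin> X})"
          using FM by simp
        have "e2 \<in> X - {e1} \<union> {v}" using e2X ne by blast
        moreover have "e2 \<notin> X - {e1} \<union> {v}" using r M unfolding ribbon_loop_def by (rule bspec)
        ultimately show False by contradiction
      qed
    qed
  next
    assume "ribbon_loop (E, F) e2"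
    thus "ribbon_loop (E', {X \<in> F. e1 \<notin> X}) e2" unfolding ribbon_loop_def FM by simp
  qed
qed

lemma ribbon_del:
  assumes ex: "exch F" and fin: "\<forall>X\<in>F. finite X" and ne: "e1 \<noteq> e2"
  shows "ribbon_loop (deletion (E, F) e1) e2 \<longleftrightarrow> ribbon_loop (E, F) e2"
  using coloop_case[OF fin _ ne] noncoloop_case[OF ex fin _ ne]
  unfolding deletion_def coloop_def by auto

lemma sd_twist: "(A \<triangle> X) \<triangle> (A \<triangle> Y) = X \<triangle> Y" by (auto simp: sdiff_def)
lemma sd_assoc: "(A \<triangle> X) \<triangle> B = A \<triangle> (X \<triangle> B)" by (auto simp: sdiff_def)

lemma exch_twist:
  assumes "exch F" shows "exch ((\<lambda>X. A \<triangle> X) ` F)"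
  unfolding exch_def
proof (intro ballI)
  fix X' Y' u assume "X' \<in> (\<triangle>) A ` F" "Y' \<in> (\<triangle>) A ` F" and u: "u \<in> X' \<triangle> Y'"
  then obtain X Y where XY: "X \<in> F" "Y \<in> F" "X' = A \<triangle> X" "Y' = A \<triangle> Y" by blast
  hence "u \<in> X \<triangle> Y" using u sd_twist by metis
  then obtain v where "v \<in> X \<triangle> Y" "X \<triangle> {u, v} \<in> F" using assms XY unfolding exch_def by blast
  thus "\<exists>v\<in>X' \<triangle> Y'. X' \<triangle> {u, v} \<in> (\<triangle>) A ` F"
    using XY sd_twist sd_assoc by (metis image_eqI)
qed

theorem lemma3:
  fixes E :: "'a set" and F :: "'a set set" and e1 e2 :: 'a
  assumes "delta_matroid (E, F)"
    and "e1 \<in> E" and "e2 \<in> E" and "e1 \<noteq> e2"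
  shows "primal_type (deletion (E, F) e1) e2 = primal_type (E, F) e2"
proof -
  have ex: "exch F" using assms(1) unfolding delta_matroid_def exch_def Let_def by simp
  have fin: "\<forall>X\<in>F. finite X"
    using assms(1) unfolding delta_matroid_def Let_def fst_conv snd_conv by (meson finite_subset)
  have fin2: "\<forall>X\<in>(\<lambda>X. {e2} \<triangle> X) ` F. finite X" using fin by (auto simp: sdiff_def)
  have col: "coloop (E, (\<lambda>X. {e2} \<triangle> X) ` F) e1 \<longleftrightarrow> coloop (E, F) e1"
    using assms(4) unfolding coloop_def by (auto simp: sdiff_def)
  have tw: "twist (deletion (E, F) e1) {e2} = deletion (E, (\<lambda>X. {e2} \<triangle> X) ` F) e1"
  proof (cases "coloop (E, F) e1")
    case True
    have "(\<lambda>X. {e2} \<triangle> X) ` (\<lambda>X. X - {e1}) ` F = (\<lambda>X. X - {e1}) ` (\<lambda>X. {e2} \<triangle> X) ` F"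
      unfolding image_image using assms(4) by (intro image_cong) (auto simp: sdiff_def)
    thus ?thesis using True col unfolding twist_def deletion_def by simp
  next
    case False
    have "(\<lambda>X. {e2} \<triangle> X) ` {X \<in> F. e1 \<notin> X} = {X \<in> (\<lambda>X. {e2} \<triangle> X) ` F. e1 \<notin> X}"
      using assms(4) by (auto simp: sdiff_def)
    thus ?thesis using False col unfolding twist_def deletion_def by simp
  qed
  have t2: "twist (E, F) {e2} = (E, (\<lambda>X. {e2} \<triangle> X) ` F)" unfolding twist_def by simp
  show ?thesis
    unfolding primal_type_def tw t2
    using ribbon_del[OF ex fin assms(4)] ribbon_del[OF exch_twist[OF ex] fin2 assms(4)]
    by simp
qed

end
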